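(* Let $S$ be oriented and let $(T,b)$ be a branched ideal triangulation of $(S,V)$. Let $\epsilon_{+}$ (resp. $\epsilon_-$) be the number of abstract triangles $t$ of $T$ with $*_{(t,b)}=+1$ (resp. $-1$). Then $\epsilon_+=\epsilon_-$.
   Context: $S$ is a compact closed connected oriented surface and $V\subset S$ is a finite set of marked points with $\chi(S)-|V|<0$. An ideal triangulation of $(S,V)$ is a possibly loose triangulation of $S$ with vertex set $V$. A branching $b$ orients all edges so that on each abstract triangle $t$ the orientations are induced by a total order $v_0<v_1<v_2$ of its vertices, edges pointing to the larger endpoint. The sign $*_{(t,b)}\in\{\pm1\}$ is $+1$ if the orientation of $t$ determined by the ordered triple $(v_0,v_1,v_2)$ agrees with the orientation of $S$, and $-1$ otherwise. Thus $\sum_t *_{(t,b)}(t,b)$ is the simplicial fundamental cycle of $S$. *)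

theory Defs
  imports "HOL-Combinatorics.Permutations"
begin

text \<open>
Combinatorial model of an ideal (possibly loose) triangulation of a closed oriented
surface. Triangle t has corners (t,0),(t,1),(t,2);
the cyclic order 0,1,2 is the orientation of t induced by the orientation of S.
Side (t,i) (i<3) joins corner i to corner (i+1) mod 3. The involution g pairs sides;
the gluing of side (t,i) with side g(t,i) = (t',j) is orientation reversing,
i.e. corner i of t is identified with corner (j+1) mod 3 of t' and corner (i+1) mod 3
of t with corner j of t'. The surface S is the quotient; it is automatically an oriented
closed surface, and its vertices (the marked set V) are the classes of corners.
\<close>

definition sides :: "'f set \<Rightarrow> ('f \<times> nat) set" where
  "sides F = F \<times> {..<3}"

definition side_gluing :: "'f set \<Rightarrow> ('f \<times> nat \<Rightarrow> 'f \<times> nat) \<Rightarrow> bool" where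
  "side_gluing F g \<longleftrightarrow>
     (\<forall>s\<in>sides F. g s \<in> sides F \<and> g (g s) = s \<and> g s \<noteq> s)"

definition corner_adj :: "'f set \<Rightarrow> ('f \<times> nat \<Rightarrow> 'f \<times> nat) \<Rightarrow> 'f \<times> nat \<Rightarrow> 'f \<times> nat \<Rightarrow> bool" where
  "corner_adj F g c d \<longleftrightarrow>
     (\<exists>t i t' j. (t,i) \<in> sides F \<and> g (t,i) = (t',j) \<and>
        ((c = (t,i) \<and> d = (t', (j+1) mod 3)) \<or> (c = (t,(i+1) mod 3) \<and> d = (t',j))))"

definition corner_equiv :: "'f set \<Rightarrow> ('f \<times> nat \<Rightarrow> 'f \<times> nat) \<Rightarrow> ('f \<times> nat) rel" where
  "corner_equiv F g = {(c,d). c \<in> sides F \<and> d \<in> sides F \<and>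
      (\<lambda>x y. corner_adj F g x y \<or> corner_adj F g y x)\<^sup>*\<^sup>* c d}"

definition tri_vertices :: "'f set \<Rightarrow> ('f \<times> nat \<Rightarrow> 'f \<times> nat) \<Rightarrow> ('f \<times> nat) set set" where
  "tri_vertices F g = sides F // corner_equiv F g"

definition tri_edges :: "'f set \<Rightarrow> ('f \<times> nat \<Rightarrow> 'f \<times> nat) \<Rightarrow> ('f \<times> nat) set set" where
  "tri_edges F g = (\<lambda>s. {s, g s}) ` sides F"

definition euler_char :: "'f set \<Rightarrow> ('f \<times> nat \<Rightarrow> 'f \<times> nat) \<Rightarrow> int" where
  "euler_char F g = int (card (tri_vertices F g)) - int (card (tri_edges F g)) + int (card F)"

text \<open>connectedness of S = connectedness of the dual graph\<close>
definition tri_connected :: "'f set \<Rightarrow> ('f \<times> nat \<Rightarrow> 'f \<times> nat) \<Rightarrow> bool" where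
  "tri_connected F g \<longleftrightarrow>
     (\<forall>t\<in>F. \<forall>t'\<in>F. (\<lambda>x y. \<exists>i<3. x \<in> F \<and> fst (g (x,i)) = y)\<^sup>*\<^sup>* t t')"

definition oriented_ideal_triangulation :: "'f set \<Rightarrow> ('f \<times> nat \<Rightarrow> 'f \<times> nat) \<Rightarrow> bool" where
  "oriented_ideal_triangulation F g \<longleftrightarrow>
     finite F \<and> side_gluing F g \<and> tri_connected F g \<and>
     euler_char F g - int (card (tri_vertices F g)) < 0"

text \<open>A branching: for every triangle t, b t is the rank function of a total order on its
corners (corner c has rank b t c, so b t permutes {0,1,2}); the edge orientations induced
on each triangle (towards the larger endpoint) agree across every gluing.\<close>
definition branching :: "'f set \<Rightarrow> ('f \<times> nat \<Rightarrow> 'f \<times> nat) \<Rightarrow> ('f \<Rightarrow> nat \<Rightarrow> nat) \<Rightarrow> bool" where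
  "branching F g b \<longleftrightarrow>
     (\<forall>t\<in>F. b t permutes {..<3}) \<and>
     (\<forall>t i t' j. (t,i) \<in> sides F \<longrightarrow> g (t,i) = (t',j) \<longrightarrow>
        (b t i < b t ((i+1) mod 3) \<longleftrightarrow> b t' ((j+1) mod 3) < b t' j))"

text \<open>The sign *_(t,b): the ordered triple (v0,v1,v2) of corners, v_k = inv (b t) k, is
compared with the orientation (0,1,2) of t; it agrees iff the permutation k \<mapsto> v_k is even.\<close>
definition branch_sign :: "('f \<Rightarrow> nat \<Rightarrow> nat) \<Rightarrow> 'f \<Rightarrow> int" where
  "branch_sign b t = sign (inv (b t))"

end

theory Submission imports Defs begin

lemma card3: "card {i::nat. i < 3 \<and> Q i} = (if Q 0 then 1 else 0) + (if Q 1 then 1 else 0) + (if Q 2 then 1 else (0::nat))"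
proof -
  have "{i::nat. i < 3 \<and> Q i} = {..<3} \<inter> {i. Q i}" by auto
  then have "card {i::nat. i < 3 \<and> Q i} = (\<Sum>i<3. if Q i then 1 else (0::nat))"
    using sum.inter_restrict[of "{..<3::nat}" "\<lambda>_. 1::nat" "{i. Q i}"] by simp
  also have "\<dots> = (if Q 0 then 1 else 0) + (if Q 1 then 1 else 0) + (if Q 2 then 1 else (0::nat))"
    by (simp add: numeral_3_eq_3 numeral_2_eq_2)
  finally show ?thesis .
qed

lemma tri_count:
  fixes p :: "nat \<Rightarrow> nat"
  assumes p: "p permutes {..<3}"
  shows "card {i. i<3 \<and> p i < p ((i+1) mod 3)} = (if sign (inv p) = 1 then 2 else 1)"
proof -
  have perm: "permutation p" unfolding permutation_permutes using p by blast
  have r: "p x \<in> {..<3}" if "x < 3" for x using permutes_in_image[OF p, of x] that by simp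
  have out: "p x = x" if "x \<ge> 3" for x using p that by (simp add: permutes_not_in)
  have inj: "inj p" using p permutes_inj by blast
  have d01: "p 0 \<noteq> p 1" "p 0 \<noteq> p 2" "p 1 \<noteq> p 2" by (simp_all add: inj_eq[OF inj])
  have pe: "p = (\<lambda>x. if x = 0 then p 0 else if x = 1 then p 1 else if x = 2 then p 2 else x)"
    using out by (auto simp: fun_eq_iff numeral_3_eq_3)
  have lt: "p 0 < 3" "p 1 < 3" "p 2 < 3" using r by auto
  have sg: "sign (inv p) = sign p" using perm by (simp add: sign_inverse)
  have c3: "card {i. i<3 \<and> p i < p ((i+1) mod 3)} = (if p 0 < p 1 then 1 else 0) + (if p 1 < p 2 then 1 else 0) + (if p 2 < p 0 then 1 else (0::nat))"
    by (simp only: card3) (simp add: numeral_2_eq_2)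
  have s1: "sign (transpose (0::nat) 1) = -1" "sign (transpose (1::nat) 2) = -1" "sign (transpose (0::nat) 2) = -1"
    by (simp_all add: sign_swap_id)
  have pt: "permutation (transpose (a::nat) b)" for a b by (simp add: permutation_swap_id)
  consider "p 0 = 0" "p 1 = 1" "p 2 = 2" | "p 0 = 1" "p 1 = 0" "p 2 = 2" | "p 0 = 0" "p 1 = 2" "p 2 = 1"
    | "p 0 = 2" "p 1 = 1" "p 2 = 0" | "p 0 = 1" "p 1 = 2" "p 2 = 0" | "p 0 = 2" "p 1 = 0" "p 2 = 1"
    using lt d01 by (auto simp: numeral_3_eq_3 less_Suc_eq)
  then show ?thesis
  proof cases
    case 1
    then have "p = id" by (subst pe) (auto simp: fun_eq_iff)
    then show ?thesis using c3 sg 1 by simp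
  next
    case 2
    then have "p = transpose 0 1" by (subst pe) (auto simp: fun_eq_iff transpose_def)
    then show ?thesis using c3 sg 2 s1 by simp
  next
    case 3
    then have "p = transpose 1 2" by (subst pe) (auto simp: fun_eq_iff transpose_def)
    then show ?thesis using c3 sg 3 s1 by simp
  next
    case 4
    then have "p = transpose 0 2" by (subst pe) (auto simp: fun_eq_iff transpose_def)
    then show ?thesis using c3 sg 4 s1 by simp
  next
    case 5
    then have "p = transpose 0 1 \<circ> transpose 1 2" by (subst pe) (auto simp: fun_eq_iff transpose_def)
    then show ?thesis using c3 sg 5 s1 by (simp add: sign_compose pt)
  next
    case 6
    then have "p = transpose 1 2 \<circ> transpose 0 1" by (subst pe) (auto simp: fun_eq_iff transpose_def)
    then show ?thesis using c3 sg 6 s1 by (simp add: sign_compose pt)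
  qed
qed

lemma card3_neg: "card {i::nat. i < 3 \<and> \<not> Q i} = 3 - card {i::nat. i < 3 \<and> Q i}"
  by (simp only: card3) simp

theorem lemma2p1:
  fixes F :: "'f set" and g :: "'f \<times> nat \<Rightarrow> 'f \<times> nat" and b :: "'f \<Rightarrow> nat \<Rightarrow> nat"
  assumes "oriented_ideal_triangulation F g"
    and "branching F g b"
  shows "card {t \<in> F. branch_sign b t = 1} = card {t \<in> F. branch_sign b t = -1}"
proof -
  have fin: "finite F" and sg: "side_gluing F g" using assms(1) by (auto simp: oriented_ideal_triangulation_def)
  have bp: "\<And>t. t \<in> F \<Longrightarrow> b t permutes {..<3}"
    and br: "\<And>t i t' j. (t,i) \<in> sides F \<Longrightarrow> g (t,i) = (t',j) \<Longrightarrow>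
        (b t i < b t ((i+1) mod 3) \<longleftrightarrow> b t' ((j+1) mod 3) < b t' j)"
    using assms(2) by (auto simp: branching_def)
  define fw where "fw s = (b (fst s) (snd s) < b (fst s) ((snd s + 1) mod 3))" for s
  define A where "A = {s \<in> sides F. fw s}"
  define B where "B = {s \<in> sides F. \<not> fw s}"
  have gs: "g s \<in> sides F" "g (g s) = s" if "s \<in> sides F" for s
    using sg that by (auto simp: side_gluing_def)
  have flip: "fw (g s) \<longleftrightarrow> \<not> fw s" if s: "s \<in> sides F" for s
  proof -
    obtain t i where st: "s = (t,i)" by force
    obtain t' j where gt: "g (t,i) = (t',j)" by force
    have "(t',j) \<in> sides F" using gs(1)[OF s] by (simp only: st gt)
    then have t': "t' \<in> F" and j: "j < 3" by (auto simp: sides_def)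
    have "inj (b t')" using bp[OF t'] permutes_inj by blast
    moreover have "j \<noteq> (j+1) mod 3" proof -
      have "j = 0 \<or> j = 1 \<or> j = 2" using j by auto
      then show ?thesis by auto
    qed
    ultimately have ne: "b t' j \<noteq> b t' ((j+1) mod 3)" by (simp add: inj_eq)
    show ?thesis using br[of t i t' j] s st gt ne unfolding fw_def by auto
  qed
  have "bij_betw g A B"
    by (rule bij_betw_byWitness[where f'=g]) (auto simp: A_def B_def gs flip)
  then have AB: "card A = card B" by (rule bij_betw_same_card)
  define cnt where "cnt t = card {i. i<3 \<and> b t i < b t ((i+1) mod 3)}" for t
  have A_eq: "A = Sigma F (\<lambda>t. {i. i<3 \<and> b t i < b t ((i+1) mod 3)})"
    by (auto simp: A_def sides_def fw_def)
  have B_eq: "B = Sigma F (\<lambda>t. {i. i<3 \<and> \<not> b t i < b t ((i+1) mod 3)})"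
    by (auto simp: B_def sides_def fw_def)
  have cA: "card A = (\<Sum>t\<in>F. cnt t)"
    unfolding A_eq cnt_def by (rule card_SigmaI) (auto simp: fin)
  have cB: "card B = (\<Sum>t\<in>F. 3 - cnt t)"
    unfolding B_eq cnt_def card3_neg[symmetric] by (rule card_SigmaI) (auto simp: fin)
  define P where "P = {t \<in> F. branch_sign b t = 1}"
  define N where "N = {t \<in> F. branch_sign b t = -1}"
  have cnt: "cnt t = (if branch_sign b t = 1 then 2 else 1)" if "t \<in> F" for t
    using tri_count[OF bp[OF that]] unfolding cnt_def branch_sign_def by simp
  have FP: "F \<inter> {t. branch_sign b t = 1} = P" by (auto simp: P_def)
  have FN: "F \<inter> - {t. branch_sign b t = 1} = N" by (auto simp: N_def branch_sign_def sign_def)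
  have "card A = (\<Sum>t\<in>F. if branch_sign b t = 1 then 2 else 1)"
    using cA cnt by simp
  also have "\<dots> = 2 * card P + card N"
    by (simp add: sum.If_cases fin FP FN)
  finally have 1: "card A = 2 * card P + card N" .
  have "card B = (\<Sum>t\<in>F. if branch_sign b t = 1 then 1 else 2)"
    using cB cnt by (auto intro: sum.cong)
  also have "\<dots> = card P + 2 * card N"
    by (simp add: sum.If_cases fin FP FN)
  finally have 2: "card B = card P + 2 * card N" .
  show ?thesis using 1 2 AB unfolding P_def N_def by simp
qed

end
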